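(* Let $S$ be a string of length $n$ and $1\le\tau\le n$. Let $\mathrm{ID}:[1..n-\tau+1]\to\mathbb{Z}$ be any function such that $\mathrm{ID}(j)$ depends only on $S[j..j+\tau-1]$, i.e. $S[j..j+\tau-1]=S[k..k+\tau-1]$ implies $\mathrm{ID}(j)=\mathrm{ID}(k)$. Define $$P=\left\{j\in[1..n-\tau]\;\middle|\;\exists \ell\in[j-\tau+1..j]:\ \mathrm{ID}(j)=\min_{k\in[\ell..\ell+\tau-1]}\mathrm{ID}(k)\right\}.$$ Then $P$ is a $(2\tau,2\tau)$-partitioning set of $S$.
   Context: $[a..b]=\{a,\dots,b\}$. A prefix of length $y\ge1$ of a string $W$ is a period of $W$ if $W[x]=W[x+y]$ for all $1\le x\le |W|-y$; $\rho_W$ is the shortest period length, and $W$ is periodic if $\rho_W\le |W|/2$. For $1\le\tau'\le\delta\le n$, a set $P\subseteq[n]$ is a $(\tau',\delta)$-partitioning set of $S$ if (1) for any $i,j\in[1+\delta..n-\delta]$ with $S[i-\delta..i+\delta]=S[j-\delta..j+\delta]$ we have $i\in P\Leftrightarrow j\in P$; and (2) for any two consecutive elements $p_i<p_{i+1}$ of $P\cup\{1,n+1\}$, either $p_{i+1}-p_i\le\tau'$, or $p_{i+1}-p_i>\tau'$ and $u=S[p_i..p_{i+1}-1]$ is periodic with $\rho_u\le\tau'$. *)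

theory Defs
  imports Main
begin

text \<open>Strings are lists; positions are 1-based: the character S[x] is S ! (x - 1).\<close>

definition substr :: "'a list \<Rightarrow> nat \<Rightarrow> nat \<Rightarrow> 'a list" where
  "substr S a b = take (Suc b - a) (drop (a - 1) S)"
  \<comment> \<open>S[a..b], 1-based, inclusive (empty if b < a)\<close>

definition has_period :: "'a list \<Rightarrow> nat \<Rightarrow> bool" where
  "has_period W y \<longleftrightarrow> 1 \<le> y \<and> y \<le> length W \<and>
     (\<forall>x. 1 \<le> x \<and> x \<le> length W - y \<longrightarrow> W ! (x - 1) = W ! (x + y - 1))"

definition min_period :: "'a list \<Rightarrow> nat" where
  "min_period W = (LEAST y. has_period W y)"

definition periodic :: "'a list \<Rightarrow> bool" where
  "periodic W \<longleftrightarrow> 2 * min_period W \<le> length W"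

definition consecutive :: "nat set \<Rightarrow> nat \<Rightarrow> nat \<Rightarrow> bool" where
  "consecutive Q p q \<longleftrightarrow> p \<in> Q \<and> q \<in> Q \<and> p < q \<and> (\<forall>r\<in>Q. \<not> (p < r \<and> r < q))"

definition partitioning_set :: "'a list \<Rightarrow> nat \<Rightarrow> nat \<Rightarrow> nat set \<Rightarrow> bool" where
  "partitioning_set S \<tau>' \<delta> P \<longleftrightarrow>
     P \<subseteq> {1..length S} \<and>
     (\<forall>i j. i \<in> {1 + \<delta>..length S - \<delta>} \<and> j \<in> {1 + \<delta>..length S - \<delta>} \<and>
            substr S (i - \<delta>) (i + \<delta>) = substr S (j - \<delta>) (j + \<delta>) \<longrightarrow>
            (i \<in> P \<longleftrightarrow> j \<in> P)) \<and>
     (\<forall>p q. consecutive (P \<union> {1, length S + 1}) p q \<longrightarrow>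
            q - p \<le> \<tau>' \<or>
            (q - p > \<tau>' \<and> periodic (substr S p (q - 1)) \<and> min_period (substr S p (q - 1)) \<le> \<tau>'))"

end

theory Submission
  imports Defs
begin

lemma substr_len: "1 \<le> a \<Longrightarrow> b \<le> length S \<Longrightarrow> length (substr S a b) = Suc b - a"
  unfolding substr_def by simp

lemma substr_nth: "1 \<le> a \<Longrightarrow> b \<le> length S \<Longrightarrow> t < Suc b - a \<Longrightarrow> substr S a b ! t = S ! (a - 1 + t)"
  unfolding substr_def by simp

lemma dir:
  fixes S :: "'a list" and \<tau> :: nat and ID :: "nat \<Rightarrow> int"
  assumes t1: "1 \<le> \<tau>"
    and idA: "\<forall>j \<in> {1..length S - \<tau> + 1}. \<forall>k \<in> {1..length S - \<tau> + 1}.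
           substr S j (j + \<tau> - 1) = substr S k (k + \<tau> - 1) \<longrightarrow> ID j = ID k"
    and i: "i \<in> {1 + 2*\<tau>..length S - 2*\<tau>}" and j: "j \<in> {1 + 2*\<tau>..length S - 2*\<tau>}"
    and eq: "substr S (i - 2*\<tau>) (i + 2*\<tau>) = substr S (j - 2*\<tau>) (j + 2*\<tau>)"
    and iP: "i \<in> {j \<in> {1..length S - \<tau>}. \<exists>l \<in> {j + 1 - \<tau>..j}. 1 \<le> l \<and>
               ID j = Min (ID ` {l..l + \<tau> - 1})}"
  shows "j \<in> {j \<in> {1..length S - \<tau>}. \<exists>l \<in> {j + 1 - \<tau>..j}. 1 \<le> l \<and>
               ID j = Min (ID ` {l..l + \<tau> - 1})}"
proof -
  let ?n = "length S"
  have s1: "S ! (i - 2*\<tau> - 1 + x) = S ! (j - 2*\<tau> - 1 + x)" if "x \<le> 4*\<tau>" for x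
  proof -
    have "substr S (i - 2*\<tau>) (i + 2*\<tau>) ! x = S ! (i - 2*\<tau> - 1 + x)"
      using i that by (intro substr_nth) auto
    moreover have "substr S (j - 2*\<tau>) (j + 2*\<tau>) ! x = S ! (j - 2*\<tau> - 1 + x)"
      using j that by (intro substr_nth) auto
    ultimately show ?thesis using eq by simp
  qed
  have s2: "substr S (i+1-\<tau>+d) (i+1-\<tau>+d + \<tau> - 1) = substr S (j+1-\<tau>+d) (j+1-\<tau>+d + \<tau> - 1)"
    if "d \<le> 2*\<tau> - 2" for d
  proof (rule nth_equalityI)
    show "length (substr S (i+1-\<tau>+d) (i+1-\<tau>+d + \<tau> - 1)) = length (substr S (j+1-\<tau>+d) (j+1-\<tau>+d + \<tau> - 1))"
    proof -
      have a: "1 \<le> i+1-\<tau>+d" "i+1-\<tau>+d+\<tau>-1 \<le> length S" using i that t1 by auto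
      have b: "1 \<le> j+1-\<tau>+d" "j+1-\<tau>+d+\<tau>-1 \<le> length S" using j that t1 by auto
      show ?thesis unfolding substr_len[OF a] substr_len[OF b] using i j t1 by simp
    qed
  next
    fix t assume "t < length (substr S (i+1-\<tau>+d) (i+1-\<tau>+d + \<tau> - 1))"
    have a: "1 \<le> i+1-\<tau>+d" "i+1-\<tau>+d+\<tau>-1 \<le> length S" using i that t1 by auto
    then have tt: "t < \<tau>" using i that t1 \<open>t < _\<close> unfolding substr_len[OF a] by simp
    have "substr S (i+1-\<tau>+d) (i+1-\<tau>+d + \<tau> - 1) ! t = S ! (i - 2*\<tau> - 1 + (\<tau>+1+d+t))"
      using i that tt t1 by (subst substr_nth) (auto intro: arg_cong[where f="(!) S"])
    also have "\<dots> = S ! (j - 2*\<tau> - 1 + (\<tau>+1+d+t))" by (rule s1) (use that tt in simp)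
    also have "\<dots> = substr S (j+1-\<tau>+d) (j+1-\<tau>+d + \<tau> - 1) ! t"
      using j that tt t1 by (subst substr_nth) (auto intro: arg_cong[where f="(!) S"])
    finally show "substr S (i+1-\<tau>+d) (i+1-\<tau>+d + \<tau> - 1) ! t = substr S (j+1-\<tau>+d) (j+1-\<tau>+d + \<tau> - 1) ! t" .
  qed
  have s3: "ID (i+1-\<tau>+d) = ID (j+1-\<tau>+d)" if "d \<le> 2*\<tau> - 2" for d
  proof -
    have m1: "i+1-\<tau>+d \<in> {1..length S - \<tau> + 1}" using i that t1 by auto
    have m2: "j+1-\<tau>+d \<in> {1..length S - \<tau> + 1}" using j that t1 by auto
    show ?thesis using idA m1 m2 s2[OF that] by blast
  qed
  from iP obtain l where l: "l \<in> {i + 1 - \<tau>..i}" "1 \<le> l" "ID i = Min (ID ` {l..l + \<tau> - 1})" by auto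
  define e where "e = l - (i+1-\<tau>)"
  have le: "l = i+1-\<tau>+e" "e \<le> \<tau> - 1" using l i t1 unfolding e_def by auto
  have img: "ID ` {l..l + \<tau> - 1} = ID ` {j+1-\<tau>+e..j+1-\<tau>+e + \<tau> - 1}"
  proof -
    have r1: "{l..l + \<tau> - 1} = (+) (i+1-\<tau>) ` {e..e+\<tau>-1}"
      unfolding image_add_atLeastAtMost using le t1 i by (simp add: add.commute)
    have r2: "{j+1-\<tau>+e..j+1-\<tau>+e + \<tau> - 1} = (+) (j+1-\<tau>) ` {e..e+\<tau>-1}"
      unfolding image_add_atLeastAtMost using le t1 j by (simp add: add.commute)
    have "ID ` {l..l + \<tau> - 1} = (\<lambda>t. ID (i+1-\<tau>+t)) ` {e..e+\<tau>-1}"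
      unfolding r1 image_image by simp
    also have "\<dots> = (\<lambda>t. ID (j+1-\<tau>+t)) ` {e..e+\<tau>-1}"
      using s3 le t1 by (intro image_cong) auto
    also have "\<dots> = ID ` {j+1-\<tau>+e..j+1-\<tau>+e + \<tau> - 1}"
      unfolding r2 image_image by simp
    finally show ?thesis .
  qed
  have "ID j = ID i" using s3[of "\<tau> - 1"] t1 i j by auto
  then have "ID j = Min (ID ` {j+1-\<tau>+e..j+1-\<tau>+e + \<tau> - 1})" using l img by simp
  moreover have "j+1-\<tau>+e \<in> {j + 1 - \<tau>..j}" "1 \<le> j+1-\<tau>+e" using le j t1 by auto
  ultimately show ?thesis using j by auto
qed

theorem lemma9:
  fixes S :: "'a list" and \<tau> :: nat and ID :: "nat \<Rightarrow> int"
  assumes "1 \<le> \<tau>" and "\<tau> \<le> length S"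
    and "\<forall>j \<in> {1..length S - \<tau> + 1}. \<forall>k \<in> {1..length S - \<tau> + 1}.
           substr S j (j + \<tau> - 1) = substr S k (k + \<tau> - 1) \<longrightarrow> ID j = ID k"
  shows "partitioning_set S (2 * \<tau>) (2 * \<tau>)
           {j \<in> {1..length S - \<tau>}. \<exists>l \<in> {j + 1 - \<tau>..j}. 1 \<le> l \<and>
               ID j = Min (ID ` {l..l + \<tau> - 1})}"
proof -
  let ?P = "{j \<in> {1..length S - \<tau>}. \<exists>l \<in> {j + 1 - \<tau>..j}. 1 \<le> l \<and>
               ID j = Min (ID ` {l..l + \<tau> - 1})}"
  have gap: "q - p \<le> 2*\<tau>" if c: "consecutive (?P \<union> {1, length S + 1}) p q" for p q
  proof (rule ccontr)
    assume "\<not> q - p \<le> 2*\<tau>"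
    then have big: "q > p + 2*\<tau>" by simp
    have qn: "q \<le> length S + 1" and p1: "p \<ge> 1"
      using c assms(2) unfolding consecutive_def by auto
    have none: "\<And>r. r \<in> ?P \<Longrightarrow> \<not> (p < r \<and> r < q)" using c unfolding consecutive_def by auto
    have fin: "finite (ID ` {p+1..p+1+\<tau>-1})" by simp
    have ne: "ID ` {p+1..p+1+\<tau>-1} \<noteq> {}" using assms(1) by auto
    obtain k where k: "k \<in> {p+1..p+1+\<tau>-1}" "ID k = Min (ID ` {p+1..p+1+\<tau>-1})"
      using Min_in[OF fin ne] by auto
    have "k \<in> ?P" using k assms(1) big qn p1
      by (auto intro!: bexI[where x="p+1"])
    moreover have "p < k \<and> k < q" using k big assms(1) by auto
    ultimately show False using none by blast
  qed
  show ?thesis unfolding partitioning_set_def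
  proof (intro conjI allI impI)
    show "?P \<subseteq> {1..length S}"
    proof
      fix x assume "x \<in> ?P"
      then have "x \<in> {1..length S - \<tau>}" by simp
      then have a: "1 \<le> x" and b: "x \<le> length S - \<tau>" by simp_all
      have "x \<le> length S" using le_trans[OF b diff_le_self] .
      then show "x \<in> {1..length S}" using a by simp
    qed
  next
    fix i j assume h: "i \<in> {1 + 2 * \<tau>..length S - 2 * \<tau>} \<and> j \<in> {1 + 2 * \<tau>..length S - 2 * \<tau>} \<and>
            substr S (i - 2 * \<tau>) (i + 2 * \<tau>) = substr S (j - 2 * \<tau>) (j + 2 * \<tau>)"
    show "i \<in> ?P \<longleftrightarrow> j \<in> ?P"
    proof
      assume "i \<in> ?P" then show "j \<in> ?P" using dir[OF assms(1) assms(3), of i j] h by blast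
    next
      assume "j \<in> ?P" then show "i \<in> ?P" using dir[OF assms(1) assms(3), of j i] h by simp
    qed
  next
    fix p q assume "consecutive (?P \<union> {1, length S + 1}) p q"
    then show "q - p \<le> 2 * \<tau> \<or> (2 * \<tau> < q - p \<and> periodic (substr S p (q - 1)) \<and> min_period (substr S p (q - 1)) \<le> 2 * \<tau>)"
      using gap by blast
  qed
qed

end
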